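(* Let $T$ be a $C_{p^rq^s}$-transfer system with exactly two connected components. Then $T$ is lesser simply paired if and only if the connected component of $(0,0)$ is $V_0=\{(0,j):0\le j\le s\}$ or $H_0=\{(i,0):0\le i\le r\}$. In that case $\mathrm{Hull}(T)\ne T_c$, so $(T,\mathrm{Hull}(T))$ and $(T,T_c)$ are two distinct compatible pairs and are the only compatible pairs with first entry $T$.
   Context: $p,q$ are distinct primes and $r,s\ge 0$ integers. The subgroups of $C_{p^rq^s}$ are identified with grid points $(i,j)$, $0\le i\le r$, $0\le j\le s$, where $(i,j)$ stands for $C_{p^iq^j}$ (intersection is coordinatewise minimum). A $C_{p^rq^s}$-transfer system is a partial order $\to$ on these vertices such that: $(i_1,j_1)\to(i_2,j_2)$ implies $i_1\le i_2$, $j_1\le j_2$; it is reflexive and transitive; and $(i_1,j_1)\to(i_2,j_2)$ implies $(\min\{i_1,a\},\min\{j_1,b\})\to(\min\{i_2,a\},\min\{j_2,b\})$ for every vertex $(a,b)$. Connected components are those of the underlying undirected graph. A transfer system is saturated if whenever $L\le K\le H$ and $L\to H$ is in it then $K\to H$ is in it; $\mathrm{Hull}(T)$ is the smallest saturated transfer system containing $T$; $T_c$ is the complete transfer system (all $K\to H$ with $K\le H$). A pair $(T,T')$ is compatible if $T\subseteq T'$ and for all subgroups $A,B,C$ with $B,C\le A$: if $B\to A$ is in $T$ and $B\cap C\to B$ is in $T'$ then $C\to A$ is in $T'$. $T$ is lesser simply paired if for every transfer system $T'\supseteq T$, $(T,T')$ is compatible iff $T'\in\{\mathrm{Hull}(T),T_c\}$.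 *)

theory Defs
  imports Main "HOL-Computational_Algebra.Primes"
begin

text \<open>Subgroups of the cyclic group of order p^r q^s, encoded as grid points (i,j)
  with i \<le> r, j \<le> s; (i,j) stands for the subgroup of order p^i q^j.
  A transfer system is a relation T on these vertices, (K,H) \<in> T meaning K \<rightarrow> H.\<close>

type_synonym vtx = "nat \<times> nat"

definition verts :: "nat \<Rightarrow> nat \<Rightarrow> vtx set" where
  "verts r s = {(i,j). i \<le> r \<and> j \<le> s}"

definition sub :: "vtx \<Rightarrow> vtx \<Rightarrow> bool" where
  "sub x y \<longleftrightarrow> fst x \<le> fst y \<and> snd x \<le> snd y"

definition meet :: "vtx \<Rightarrow> vtx \<Rightarrow> vtx" where
  "meet x y = (min (fst x) (fst y), min (snd x) (snd y))"

definition transfer_system :: "nat \<Rightarrow> nat \<Rightarrow> vtx rel \<Rightarrow> bool" where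
  "transfer_system r s T \<longleftrightarrow>
     T \<subseteq> verts r s \<times> verts r s \<and>
     (\<forall>x y. (x, y) \<in> T \<longrightarrow> sub x y) \<and>
     (\<forall>x \<in> verts r s. (x, x) \<in> T) \<and>
     trans T \<and>
     (\<forall>x y a. (x, y) \<in> T \<longrightarrow> a \<in> verts r s \<longrightarrow> (meet x a, meet y a) \<in> T)"

definition component :: "vtx rel \<Rightarrow> vtx \<Rightarrow> vtx set" where
  "component T x = ((T \<union> converse T)\<^sup>*) `` {x}"

definition num_components :: "nat \<Rightarrow> nat \<Rightarrow> vtx rel \<Rightarrow> nat" where
  "num_components r s T = card (component T ` verts r s)"

definition saturated :: "nat \<Rightarrow> nat \<Rightarrow> vtx rel \<Rightarrow> bool" where
  "saturated r s T \<longleftrightarrow>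
     (\<forall>L \<in> verts r s. \<forall>K \<in> verts r s. \<forall>H \<in> verts r s.
        sub L K \<longrightarrow> sub K H \<longrightarrow> (L, H) \<in> T \<longrightarrow> (K, H) \<in> T)"

definition complete_ts :: "nat \<Rightarrow> nat \<Rightarrow> vtx rel" where
  "complete_ts r s = {(K, H). K \<in> verts r s \<and> H \<in> verts r s \<and> sub K H}"

definition Hull :: "nat \<Rightarrow> nat \<Rightarrow> vtx rel \<Rightarrow> vtx rel" where
  "Hull r s T = \<Inter> {T'. transfer_system r s T' \<and> saturated r s T' \<and> T \<subseteq> T'}"

definition compatible :: "nat \<Rightarrow> nat \<Rightarrow> vtx rel \<Rightarrow> vtx rel \<Rightarrow> bool" where
  "compatible r s T T' \<longleftrightarrow> T \<subseteq> T' \<and>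
     (\<forall>A \<in> verts r s. \<forall>B \<in> verts r s. \<forall>C \<in> verts r s.
        sub B A \<longrightarrow> sub C A \<longrightarrow> (B, A) \<in> T \<longrightarrow> (meet B C, B) \<in> T' \<longrightarrow> (C, A) \<in> T')"

definition lesser_simply_paired :: "nat \<Rightarrow> nat \<Rightarrow> vtx rel \<Rightarrow> bool" where
  "lesser_simply_paired r s T \<longleftrightarrow>
     (\<forall>T'. transfer_system r s T' \<and> T \<subseteq> T' \<longrightarrow>
        (compatible r s T T' \<longleftrightarrow> T' \<in> {Hull r s T, complete_ts r s}))"

definition V0 :: "nat \<Rightarrow> vtx set" where
  "V0 s = {(0, j) | j. j \<le> s}"

definition H0 :: "nat \<Rightarrow> vtx set" where
  "H0 r = {(i, 0) | i. i \<le> r}"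

end

theory Submission
  imports Defs
begin


lemma meet_fst[simp]: "fst (meet x y) = min (fst x) (fst y)" by (simp add: meet_def)
lemma meet_snd[simp]: "snd (meet x y) = min (snd x) (snd y)" by (simp add: meet_def)
lemma sub_iff: "sub x y \<longleftrightarrow> fst x \<le> fst y \<and> snd x \<le> snd y" by (simp add: sub_def)
lemma verts_iff: "x \<in> verts r s \<longleftrightarrow> fst x \<le> r \<and> snd x \<le> s" by (cases x) (simp add: verts_def)
lemma finite_verts: "finite (verts r s)"
  by (rule finite_subset[of _ "{0..r} \<times> {0..s}"]) (auto simp: verts_def)
lemma meet_eq_left: "sub x y \<Longrightarrow> meet x y = x"
  by (simp add: sub_def meet_def prod_eq_iff)
lemma meet_eq_right: "sub y x \<Longrightarrow> meet x y = y"
  by (simp add: sub_def meet_def prod_eq_iff)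
lemma meet_idem: "meet x x = x" by (simp add: meet_def)

lemma ts_sub: "transfer_system r s T \<Longrightarrow> (x,y) \<in> T \<Longrightarrow> sub x y"
  unfolding transfer_system_def by blast
lemma ts_verts: "transfer_system r s T \<Longrightarrow> (x,y) \<in> T \<Longrightarrow> x \<in> verts r s \<and> y \<in> verts r s"
  unfolding transfer_system_def by blast
lemma ts_refl: "transfer_system r s T \<Longrightarrow> x \<in> verts r s \<Longrightarrow> (x,x) \<in> T"
  unfolding transfer_system_def by blast
lemma ts_trans: "transfer_system r s T \<Longrightarrow> (x,y) \<in> T \<Longrightarrow> (y,z) \<in> T \<Longrightarrow> (x,z) \<in> T"
  unfolding transfer_system_def by (blast dest: transD)
lemma ts_restr: "transfer_system r s T \<Longrightarrow> (x,y) \<in> T \<Longrightarrow> a \<in> verts r s \<Longrightarrow> (meet x a, meet y a) \<in> T"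
  unfolding transfer_system_def by blast

lemma comp_self: "x \<in> component T x" by (simp add: component_def)

lemma comp_eq: assumes "y \<in> component T x" shows "component T y = component T x"
proof -
  let ?G = "T \<union> converse T"
  have xy: "(x,y) \<in> ?G\<^sup>*" using assms by (simp add: component_def)
  have sym: "converse ?G = ?G" by auto
  have "(y,x) \<in> (converse ?G)\<^sup>*" using xy by (rule rtrancl_converseI)
  then have yx: "(y,x) \<in> ?G\<^sup>*" using sym by simp
  show ?thesis unfolding component_def using xy yx by (auto intro: rtrancl_trans)
qed

lemma comp_verts: assumes "transfer_system r s T" "x \<in> verts r s"
  shows "component T x \<subseteq> verts r s"
proof
  fix y assume "y \<in> component T x"
  then have "(x,y) \<in> (T \<union> converse T)\<^sup>*" by (simp add: component_def)
  then show "y \<in> verts r s"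
    by (induction rule: rtrancl_induct) (use assms in \<open>auto dest: ts_verts\<close>)
qed

lemma comp_meet: assumes ts: "transfer_system r s T" and a: "a \<in> verts r s"
  and y: "y \<in> component T x" shows "meet y a \<in> component T (meet x a)"
proof -
  have "(x,y) \<in> (T \<union> converse T)\<^sup>*" using y by (simp add: component_def)
  then have "(meet x a, meet y a) \<in> (T \<union> converse T)\<^sup>*"
  proof (induction rule: rtrancl_induct)
    case base show ?case by simp
  next
    case (step y z)
    have R: "(meet u a, meet v a) \<in> T" if "(u,v) \<in> T" for u v
      using ts_restr[OF ts that a] .
    from step.hyps(2) have "(meet y a, meet z a) \<in> T \<union> converse T"
      using R by blast
    then show ?case by (rule rtrancl_into_rtrancl[OF step.IH])
  qed
  then show ?thesis by (simp add: component_def)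
qed

lemma reach: assumes ts: "transfer_system r s T" and m: "m \<in> verts r s"
  and low: "\<forall>y\<in>component T m. sub m y" and y: "y \<in> component T m"
  shows "(m,y) \<in> T"
proof -
  have "(m,y) \<in> (T \<union> converse T)\<^sup>*" using y by (simp add: component_def)
  then show ?thesis
  proof (induction rule: rtrancl_induct)
    case base then show ?case using ts m by (rule ts_refl)
  next
    case (step y z)
    have zc: "z \<in> component T m" using step.hyps
      by (auto simp: component_def intro: rtrancl_into_rtrancl)
    from step.hyps(2) show ?case
    proof
      assume "(y,z) \<in> T" then show ?thesis using step.IH ts
        by (blast intro: ts_trans)
    next
      assume "(y,z) \<in> converse T"
      then have zy: "(z,y) \<in> T" by simp
      then have zv: "z \<in> verts r s" and szy: "sub z y" using ts by (auto dest: ts_verts ts_sub)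
      have "(meet m z, meet y z) \<in> T" using ts step.IH zv by (rule ts_restr)
      moreover have "meet m z = m" using low zc by (auto intro: meet_eq_left)
      moreover have "meet y z = z" using szy by (rule meet_eq_right)
      ultimately show ?thesis by simp
    qed
  qed
qed

definition Rel :: "nat \<Rightarrow> nat \<Rightarrow> vtx \<Rightarrow> vtx rel" where
  "Rel r s e = {(x,y). x \<in> verts r s \<and> y \<in> verts r s \<and> sub x y \<and> (sub e x \<longleftrightarrow> sub e y)}"

lemma struct:
  assumes ts: "transfer_system r s T" and nc: "num_components r s T = 2"
  obtains e where "e \<in> verts r s" "e \<noteq> (0,0)"
    "component T (0,0) = {x \<in> verts r s. \<not> sub e x}"
    "T \<subseteq> Rel r s e"
    "\<forall>y\<in>verts r s. sub e y \<longrightarrow> (e,y) \<in> T"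
    "\<forall>y\<in>verts r s. \<not> sub e y \<longrightarrow> ((0,0),y) \<in> T"
proof -
  define D where "D = component T (0,0)"
  have z0: "(0,0) \<in> verts r s" by (simp add: verts_def)
  have fin: "finite (component T ` verts r s)" using finite_verts by simp
  have DI: "D \<in> component T ` verts r s" using z0 D_def by simp
  obtain E where EI: "E \<in> component T ` verts r s" and ED: "E \<noteq> D"
  proof -
    have "\<not> component T ` verts r s \<subseteq> {D}"
    proof
      assume "component T ` verts r s \<subseteq> {D}"
      then have "card (component T ` verts r s) \<le> card {D}" by (intro card_mono) auto
      then show False using nc by (simp add: num_components_def)
    qed
    then show ?thesis using that by blast
  qed
  have two: "\<forall>X \<in> component T ` verts r s. X = D \<or> X = E"
  proof (rule ccontr)
    assume "\<not> ?thesis" then obtain X where X: "X \<in> component T ` verts r s" "X \<noteq> D" "X \<noteq> E" by blast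
    have "card {D,E,X} \<le> card (component T ` verts r s)" using X DI EI fin by (intro card_mono) auto
    then show False using X ED nc by (simp add: num_components_def)
  qed
  obtain z where zv: "z \<in> verts r s" and Ez: "E = component T z" using EI by blast
  have compE: "x \<in> verts r s \<Longrightarrow> component T x = D \<or> component T x = E" for x using two by blast
  have inD: "x \<in> D \<Longrightarrow> component T x = D" for x unfolding D_def by (rule comp_eq)
  have inE: "x \<in> E \<Longrightarrow> component T x = E" for x unfolding Ez by (rule comp_eq)
  have part: "(x \<in> D \<longleftrightarrow> x \<notin> E)" if xv: "x \<in> verts r s" for x
  proof
    assume "x \<in> D" show "x \<notin> E"
    proof
      assume "x \<in> E" then have "component T x = E" by (rule inE)
      moreover have "component T x = D" using \<open>x \<in> D\<close> by (rule inD)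
      ultimately show False using ED by simp
    qed
  next
    assume nE: "x \<notin> E"
    have "component T x = D \<or> component T x = E" using compE xv .
    moreover have "x \<in> component T x" by (rule comp_self)
    ultimately show "x \<in> D" using nE by metis
  qed
  have Dv: "D \<subseteq> verts r s" unfolding D_def using comp_verts[OF ts z0] .
  have Ev: "E \<subseteq> verts r s" unfolding Ez using comp_verts[OF ts zv] .
  have zE: "z \<in> E" using Ez by (simp add: comp_self)
  have Dlow: "y \<in> D" if a: "x \<in> D" "y \<in> verts r s" "sub y x" for x y
  proof -
    have "meet x y \<in> component T (meet (0,0) y)" using comp_meet[OF ts a(2)] a(1) D_def by simp
    moreover have "meet x y = y" using a(3) by (rule meet_eq_right)
    moreover have "meet (0,0) y = (0,0)" by (simp add: meet_def)
    ultimately show "y \<in> D" by (simp add: D_def)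
  qed
  have Emeet: "meet x y \<in> E" if a: "x \<in> E" "y \<in> E" for x y
  proof -
    have "x \<in> component T y" using inE[OF a(2)] a(1) by simp
    then have "meet x y \<in> component T (meet y y)" using comp_meet[OF ts] a(2) Ev by blast
    then show ?thesis using inE[OF a(2)] by (simp add: meet_idem)
  qed
  define f where "f = (\<lambda>x::vtx. fst x + snd x)"
  have finE: "finite E" using Ev finite_verts finite_subset by blast
  have "Min (f ` E) \<in> f ` E" using finE zE by (intro Min_in) auto
  then obtain e where eE: "e \<in> E" and fe: "f e = Min (f ` E)" by auto
  have emin: "f e \<le> f x" if "x \<in> E" for x using fe finE that by simp
  have esub: "sub e x" if xE: "x \<in> E" for x
  proof -
    have m: "meet e x \<in> E" using Emeet eE xE by blast
    have "f e \<le> f (meet e x)" using emin m by blast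
    then have h: "fst e + snd e \<le> min (fst e) (fst x) + min (snd e) (snd x)" by (simp add: f_def)
    have "min (fst e) (fst x) \<le> fst e" "min (snd e) (snd x) \<le> snd e" by simp_all
    with h have "min (fst e) (fst x) = fst e" "min (snd e) (snd x) = snd e" by linarith+
    then show "sub e x" unfolding sub_def by (metis min.absorb_iff1)
  qed
  have ev: "e \<in> verts r s" using eE Ev by auto
  have Eeq: "E = {x \<in> verts r s. sub e x}"
  proof
    show "E \<subseteq> {x \<in> verts r s. sub e x}" using Ev esub by auto
  next
    show "{x \<in> verts r s. sub e x} \<subseteq> E"
    proof clarify
      fix x assume x: "x \<in> verts r s" "sub e x"
      show "x \<in> E"
      proof (rule ccontr)
        assume "x \<notin> E" then have "x \<in> D" using part x by blast
        then have "e \<in> D" using Dlow ev x by blast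
        then show False using part ev eE by blast
      qed
    qed
  qed
  have Deq: "D = {x \<in> verts r s. \<not> sub e x}"
  proof (intro equalityI subsetI)
    fix x assume "x \<in> D"
    moreover then have "x \<in> verts r s" using Dv by blast
    ultimately show "x \<in> {x \<in> verts r s. \<not> sub e x}" using part Eeq by blast
  next
    fix x assume "x \<in> {x \<in> verts r s. \<not> sub e x}"
    then show "x \<in> D" using part Eeq by blast
  qed
  have e0: "e \<noteq> (0,0)"
  proof
    assume "e = (0,0)"
    then have "(0,0) \<in> E" using eE by simp
    moreover have "(0,0) \<in> D" by (simp add: D_def comp_self)
    ultimately show False using part z0 by blast
  qed
  have TR: "T \<subseteq> Rel r s e"
  proof clarify
    fix x y assume xy: "(x,y) \<in> T"
    then have xv: "x \<in> verts r s" and yv: "y \<in> verts r s" and sxy: "sub x y"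
      using ts by (auto dest: ts_verts ts_sub)
    have yc: "y \<in> component T x" using xy by (auto simp: component_def)
    have "(x \<in> D \<longleftrightarrow> y \<in> D)"
    proof (cases "x \<in> D")
      case True then show ?thesis using inD yc by blast
    next
      case False then have "x \<in> E" using part xv by blast
      then have "y \<in> E" using inE yc by blast
      then show ?thesis using part yv False by blast
    qed
    then have "sub e x \<longleftrightarrow> sub e y" using xv yv Deq by blast
    then show "(x,y) \<in> Rel r s e" using xv yv sxy by (simp add: Rel_def)
  qed
  have rE: "\<forall>y\<in>verts r s. sub e y \<longrightarrow> (e,y) \<in> T"
  proof clarify
    fix y assume y: "y \<in> verts r s" "sub e y"
    have ce: "component T e = E" using inE eE by blast
    have "y \<in> E" using y Eeq by blast
    then show "(e,y) \<in> T" using reach[OF ts ev] ce esub by blast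
  qed
  have rD: "\<forall>y\<in>verts r s. \<not> sub e y \<longrightarrow> ((0,0),y) \<in> T"
  proof clarify
    fix y assume y: "y \<in> verts r s" "\<not> sub e y"
    have low: "\<forall>y\<in>component T (0,0). sub (0,0) y" by (simp add: sub_def)
    have "y \<in> D" using y Deq by blast
    then show "((0,0),y) \<in> T" using reach[OF ts z0 low] D_def by blast
  qed
  show thesis using that ev e0 Deq TR rE rD D_def by blast
qed



lemma sub_meet_iff: "sub z (meet x y) \<longleftrightarrow> sub z x \<and> sub z y"
  by (auto simp: sub_def)
lemma sub_trans: "sub x y \<Longrightarrow> sub y z \<Longrightarrow> sub x z" by (auto simp: sub_def)
lemma sub_refl: "sub x x" by (simp add: sub_def)
lemma meet_sub1: "sub (meet x y) x" by (simp add: sub_def)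
lemma meet_sub2: "sub (meet x y) y" by (simp add: sub_def)
lemma meet_mono: "sub x y \<Longrightarrow> sub (meet x a) (meet y a)" by (auto simp: sub_def)
lemma meet_verts: "x \<in> verts r s \<Longrightarrow> meet x a \<in> verts r s" by (auto simp: verts_iff)
lemma sub_verts: "sub x y \<Longrightarrow> y \<in> verts r s \<Longrightarrow> x \<in> verts r s" by (auto simp: verts_iff sub_def)
lemma zero_verts: "(0,0) \<in> verts r s" by (simp add: verts_def)
lemma zero_sub: "sub (0,0) x" by (simp add: sub_def)
lemma meet_zero: "meet (0,0) x = (0,0)" by (simp add: meet_def)

lemma Rel_iff: "(x,y) \<in> Rel r s e \<longleftrightarrow> x \<in> verts r s \<and> y \<in> verts r s \<and> sub x y \<and> (sub e x \<longleftrightarrow> sub e y)"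
  by (simp add: Rel_def)
lemma complete_iff: "(x,y) \<in> complete_ts r s \<longleftrightarrow> x \<in> verts r s \<and> y \<in> verts r s \<and> sub x y"
  by (simp add: complete_ts_def)

lemma ts_intro:
  assumes "\<And>x y. (x,y) \<in> T \<Longrightarrow> x \<in> verts r s \<and> y \<in> verts r s \<and> sub x y"
    "\<And>x. x \<in> verts r s \<Longrightarrow> (x,x) \<in> T"
    "\<And>x y z. (x,y) \<in> T \<Longrightarrow> (y,z) \<in> T \<Longrightarrow> (x,z) \<in> T"
    "\<And>x y a. (x,y) \<in> T \<Longrightarrow> a \<in> verts r s \<Longrightarrow> (meet x a, meet y a) \<in> T"
  shows "transfer_system r s T"
  unfolding transfer_system_def
proof (intro conjI)
  show "T \<subseteq> verts r s \<times> verts r s" using assms(1) by auto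
  show "\<forall>x y. (x, y) \<in> T \<longrightarrow> sub x y" using assms(1) by blast
  show "\<forall>x\<in>verts r s. (x, x) \<in> T" using assms(2) by blast
  show "trans T" using assms(3) by (auto intro: transI)
  show "\<forall>x y a. (x, y) \<in> T \<longrightarrow> a \<in> verts r s \<longrightarrow> (meet x a, meet y a) \<in> T" using assms(4) by blast
qed

lemma compat_intro:
  assumes "T \<subseteq> T'"
    "\<And>A B C. A \<in> verts r s \<Longrightarrow> B \<in> verts r s \<Longrightarrow> C \<in> verts r s \<Longrightarrow> sub B A \<Longrightarrow> sub C A
      \<Longrightarrow> (B,A) \<in> T \<Longrightarrow> (meet B C, B) \<in> T' \<Longrightarrow> (C,A) \<in> T'"
  shows "compatible r s T T'"
  using assms unfolding compatible_def by blast

lemma compatD: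
  assumes "compatible r s T T'" "A \<in> verts r s" "B \<in> verts r s" "C \<in> verts r s" "sub B A" "sub C A"
      "(B,A) \<in> T" "(meet B C, B) \<in> T'"
  shows "(C,A) \<in> T'"
  using assms unfolding compatible_def by blast

lemma Rel_ts: "transfer_system r s (Rel r s e)"
proof (rule ts_intro)
  show "x \<in> verts r s \<and> y \<in> verts r s \<and> sub x y" if "(x,y) \<in> Rel r s e" for x y
    using that by (simp add: Rel_iff)
  show "(x,x) \<in> Rel r s e" if "x \<in> verts r s" for x using that by (simp add: Rel_iff sub_refl)
  show "(x,z) \<in> Rel r s e" if "(x,y) \<in> Rel r s e" "(y,z) \<in> Rel r s e" for x y z
    using that by (auto simp: Rel_iff intro: sub_trans)
  show "(meet x a, meet y a) \<in> Rel r s e" if "(x,y) \<in> Rel r s e" "a \<in> verts r s" for x y a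
  proof -
    have a: "x \<in> verts r s" "y \<in> verts r s" "sub x y" "sub e x \<longleftrightarrow> sub e y"
      using that by (simp_all add: Rel_iff)
    have "sub e (meet x a) \<longleftrightarrow> sub e (meet y a)" using a(4) by (simp add: sub_meet_iff)
    moreover have "sub (meet x a) (meet y a)" using a(3) by (rule meet_mono)
    ultimately show ?thesis using a meet_verts unfolding Rel_iff by blast
  qed
qed

lemma complete_ts_ts: "transfer_system r s (complete_ts r s)"
proof (rule ts_intro)
  show "x \<in> verts r s \<and> y \<in> verts r s \<and> sub x y" if "(x,y) \<in> complete_ts r s" for x y
    using that by (simp add: complete_iff)
  show "(x,x) \<in> complete_ts r s" if "x \<in> verts r s" for x using that by (simp add: complete_iff sub_refl)
  show "(x,z) \<in> complete_ts r s" if "(x,y) \<in> complete_ts r s" "(y,z) \<in> complete_ts r s" for x y z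
    using that by (auto simp: complete_iff intro: sub_trans)
  show "(meet x a, meet y a) \<in> complete_ts r s" if "(x,y) \<in> complete_ts r s" "a \<in> verts r s" for x y a
    using that by (auto simp: complete_iff meet_verts meet_mono)
qed

lemma Rel_sat: "saturated r s (Rel r s e)"
  unfolding saturated_def by (auto simp: Rel_iff intro: sub_trans)

locale twoc =
  fixes r s :: nat and T :: "vtx rel" and e :: vtx
  assumes ts: "transfer_system r s T" and ev: "e \<in> verts r s" and e0: "e \<noteq> (0,0)"
    and TR: "T \<subseteq> Rel r s e"
    and rE: "\<forall>y\<in>verts r s. sub e y \<longrightarrow> (e,y) \<in> T"
    and rD: "\<forall>y\<in>verts r s. \<not> sub e y \<longrightarrow> ((0,0),y) \<in> T"
begin

lemma Hull_eq: "Hull r s T = Rel r s e"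
proof
  show "Hull r s T \<subseteq> Rel r s e" unfolding Hull_def
    by (rule Inter_lower) (use Rel_ts Rel_sat TR in blast)
  show "Rel r s e \<subseteq> Hull r s T" unfolding Hull_def
  proof (rule Inter_greatest, clarify)
    fix S x y assume S: "transfer_system r s S" "saturated r s S" "T \<subseteq> S" and xy: "(x,y) \<in> Rel r s e"
    then have xv: "x \<in> verts r s" and yv: "y \<in> verts r s" and sxy: "sub x y"
      and iff: "sub e x \<longleftrightarrow> sub e y" by (simp_all add: Rel_iff)
    show "(x,y) \<in> S"
    proof (cases "sub e y")
      case True
      then have "(e,y) \<in> S" using rE yv S(3) by blast
      then show ?thesis using S(2) True iff xv yv ev sxy unfolding saturated_def by blast
    next
      case False
      then have "((0,0),y) \<in> S" using rD yv S(3) by blast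
      then show ?thesis using S(2) xv yv sxy zero_verts zero_sub unfolding saturated_def by blast
    qed
  qed
qed

lemma Rel_compat: "compatible r s T (Rel r s e)"
proof (rule compat_intro[OF TR])
  fix A B C assume v: "A \<in> verts r s" "B \<in> verts r s" "C \<in> verts r s" and s: "sub B A" "sub C A"
    and BA: "(B,A) \<in> T" and m: "(meet B C, B) \<in> Rel r s e"
  have i1: "sub e B \<longleftrightarrow> sub e A" using BA TR by (auto simp: Rel_iff)
  have i2: "sub e (meet B C) \<longleftrightarrow> sub e B" using m by (simp add: Rel_iff)
  have "sub e C \<longleftrightarrow> sub e A"
    using i1 i2 s by (auto simp: sub_meet_iff intro: sub_trans)
  then show "(C,A) \<in> Rel r s e" using v s by (simp add: Rel_iff)
qed

lemma complete_compat: "compatible r s T (complete_ts r s)"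
proof (rule compat_intro)
  show "T \<subseteq> complete_ts r s" using ts by (auto simp: complete_iff dest: ts_verts ts_sub)
  fix A B C assume "A \<in> verts r s" "C \<in> verts r s" "sub C A"
  then show "(C,A) \<in> complete_ts r s" by (simp add: complete_iff)
qed

lemma Rel_ne_complete: "Rel r s e \<noteq> complete_ts r s"
proof
  assume eq: "Rel r s e = complete_ts r s"
  have "((0,0),e) \<in> complete_ts r s" using ev by (simp add: complete_iff zero_verts zero_sub)
  moreover have "((0,0),e) \<notin> Rel r s e" using e0 by (auto simp: Rel_iff sub_def sub_refl prod_eq_iff)
  ultimately show False using eq by simp
qed

lemma Rel_sub_compat:
  assumes c: "compatible r s T T'" and t': "transfer_system r s T'"
  shows "Rel r s e \<subseteq> T'"
proof clarify
  fix x y assume xy: "(x,y) \<in> Rel r s e"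
  then have xv: "x \<in> verts r s" and yv: "y \<in> verts r s" and sxy: "sub x y"
    and iff: "sub e x \<longleftrightarrow> sub e y" by (simp_all add: Rel_iff)
  show "(x,y) \<in> T'"
  proof (cases "sub e y")
    case True
    have "(e,y) \<in> T" using rE yv True by blast
    moreover have "meet e x = e" using True iff by (simp add: meet_eq_left)
    moreover have "(e,e) \<in> T'" using ts_refl[OF t' ev] .
    ultimately show ?thesis using compatD[OF c yv ev xv True sxy] by simp
  next
    case False
    have "((0,0),y) \<in> T" using rD yv False by blast
    moreover have "((0,0),(0,0)) \<in> T'" using ts_refl[OF t' zero_verts] .
    ultimately show ?thesis using compatD[OF c yv zero_verts xv zero_sub sxy] by (simp add: meet_zero)
  qed
qed

lemma atom_case:
  assumes atom: "e = (1,0) \<or> e = (0,1)"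
    and t': "transfer_system r s T'" and c: "compatible r s T T'"
  shows "T' = Rel r s e \<or> T' = complete_ts r s"
proof (cases "T' \<subseteq> Rel r s e")
  case True then show ?thesis using Rel_sub_compat[OF c t'] by blast
next
  case False
  have am: "meet x e = (0,0)" if "\<not> sub e x" for x
    using atom that by (auto simp: sub_def meet_def)
  have am2: "meet e x = (0,0)" if "\<not> sub e x" for x
    using atom that by (auto simp: sub_def meet_def)
  obtain x y where xy: "(x,y) \<in> T'" and nr: "(x,y) \<notin> Rel r s e" using False by auto
  have xv: "x \<in> verts r s" and yv: "y \<in> verts r s" and sxy: "sub x y"
    using ts_verts[OF t' xy] ts_sub[OF t' xy] by auto
  have nx: "\<not> sub e x" and sy: "sub e y"
    using nr xv yv sxy sub_trans[of e x y] by (auto simp: Rel_iff)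
  have "(meet x e, meet y e) \<in> T'" using ts_restr[OF t' xy ev] .
  then have ze: "((0,0), e) \<in> T'" using am[OF nx] meet_eq_right[OF sy] by simp
  have "complete_ts r s \<subseteq> T'"
  proof clarify
    fix C A assume "(C,A) \<in> complete_ts r s"
    then have Cv: "C \<in> verts r s" and Av: "A \<in> verts r s" and sCA: "sub C A" by (simp_all add: complete_iff)
    show "(C,A) \<in> T'"
    proof (cases "(C,A) \<in> Rel r s e")
      case True then show ?thesis using Rel_sub_compat[OF c t'] by blast
    next
      case False
      then have nC: "\<not> sub e C" and sA: "sub e A"
        using Cv Av sCA sub_trans[of e C A] by (auto simp: Rel_iff)
      have "(e,A) \<in> T" using rE Av sA by blast
      then show ?thesis using compatD[OF c Av ev Cv sA sCA] ze am2[OF nC] by simp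
    qed
  qed
  moreover have "T' \<subseteq> complete_ts r s" using t' by (auto simp: complete_iff dest: ts_verts ts_sub)
  ultimately show ?thesis by blast
qed

definition W :: "(vtx \<Rightarrow> nat) \<Rightarrow> vtx rel" where
  "W g = Rel r s e \<union> {(x,y). x \<in> verts r s \<and> y \<in> verts r s \<and> sub x y \<and> g x = 0}"

lemma nonatom:
  assumes g: "g = fst \<or> g = snd" and ge: "g e \<ge> 1"
    and u: "u \<in> verts r s" "sub u e" "\<not> sub e u" "g u \<noteq> 0"
  shows "\<not> lesser_simply_paired r s T"
proof
  assume lsp: "lesser_simply_paired r s T"
  have gm: "g (meet x y) = min (g x) (g y)" for x y using g by auto
  have gs: "sub x y \<Longrightarrow> g x \<le> g y" for x y using g by (auto simp: sub_def)
  have Wi: "(x,y) \<in> W g \<longleftrightarrow> x \<in> verts r s \<and> y \<in> verts r s \<and> sub x y \<and> ((sub e x \<longleftrightarrow> sub e y) \<or> g x = 0)" for x y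
    by (auto simp: W_def Rel_iff)
  have tsW: "transfer_system r s (W g)"
  proof (rule ts_intro)
    show "x \<in> verts r s \<and> y \<in> verts r s \<and> sub x y" if "(x,y) \<in> W g" for x y
      using that by (simp add: Wi)
    show "(x,x) \<in> W g" if "x \<in> verts r s" for x using that by (simp add: Wi sub_refl)
    show "(x,z) \<in> W g" if a: "(x,y) \<in> W g" "(y,z) \<in> W g" for x y z
    proof -
      have b: "x \<in> verts r s" "z \<in> verts r s" "sub x y" "sub y z" using a by (simp_all add: Wi)
      have "(sub e x \<longleftrightarrow> sub e z) \<or> g x = 0"
      proof (cases "g x = 0")
        case False
        moreover have "g x \<le> g y" using gs b(3) .
        ultimately have "g y \<noteq> 0" by simp
        then have "sub e x \<longleftrightarrow> sub e y" "sub e y \<longleftrightarrow> sub e z" using a False by (simp_all add: Wi)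
        then show ?thesis by simp
      qed simp
      moreover note b
      ultimately show ?thesis by (auto simp: Wi intro: sub_trans)
    qed
    show "(meet x a, meet y a) \<in> W g" if a: "(x,y) \<in> W g" "a \<in> verts r s" for x y a
    proof -
      have b: "x \<in> verts r s" "y \<in> verts r s" "sub x y" "(sub e x \<longleftrightarrow> sub e y) \<or> g x = 0"
        using a by (simp_all add: Wi)
      have "(sub e (meet x a) \<longleftrightarrow> sub e (meet y a)) \<or> g (meet x a) = 0"
        using b(4) by (auto simp: sub_meet_iff gm)
      moreover have "sub (meet x a) (meet y a)" using b(3) by (rule meet_mono)
      ultimately show ?thesis using b meet_verts unfolding Wi by blast
    qed
  qed
  have TW: "T \<subseteq> W g" using TR by (auto simp: W_def)
  have cW: "compatible r s T (W g)"
  proof (rule compat_intro[OF TW])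
    fix A B C assume v: "A \<in> verts r s" "B \<in> verts r s" "C \<in> verts r s" and s: "sub B A" "sub C A"
      and BA: "(B,A) \<in> T" and m: "(meet B C, B) \<in> W g"
    have i1: "sub e B \<longleftrightarrow> sub e A" using BA TR by (auto simp: Rel_iff)
    show "(C,A) \<in> W g"
    proof (cases "g C = 0")
      case True then show ?thesis using v s by (simp add: Wi)
    next
      case gC: False
      have "sub e C \<longleftrightarrow> sub e A"
      proof (cases "sub e (meet B C) \<longleftrightarrow> sub e B")
        case True
        then show ?thesis using i1 s by (auto simp: sub_meet_iff intro: sub_trans)
      next
        case False
        then have "g (meet B C) = 0" using m by (simp add: Wi)
        then have gB: "g B = 0" using gC gm by (auto simp: min_def split: if_splits)
        have "\<not> sub e B" using gs[of e B] gB ge by auto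
        then have "\<not> sub e A" using i1 by simp
        then show ?thesis using s sub_trans[of e C A] by auto
      qed
      then show ?thesis using v s by (simp add: Wi)
    qed
  qed
  have "W g \<in> {Hull r s T, complete_ts r s}"
    using lsp tsW TW cW unfolding lesser_simply_paired_def by blast
  moreover have "W g \<noteq> Rel r s e"
  proof
    assume "W g = Rel r s e"
    moreover have "((0,0),e) \<in> W g" using ev g by (auto simp: Wi zero_verts zero_sub)
    moreover have "((0,0),e) \<notin> Rel r s e" using e0 by (auto simp: Rel_iff sub_def prod_eq_iff)
    ultimately show False by simp
  qed
  moreover have "W g \<noteq> complete_ts r s"
  proof
    assume "W g = complete_ts r s"
    moreover have "(u,e) \<in> complete_ts r s" using u ev by (simp add: complete_iff)
    moreover have "(u,e) \<notin> W g" using u by (auto simp: Wi sub_refl)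
    ultimately show False by simp
  qed
  ultimately show False using Hull_eq by simp
qed

end


lemma cond_iff:
  assumes ev: "e \<in> verts r s" and e0: "e \<noteq> (0,0)"
  shows "({x \<in> verts r s. \<not> sub e x} = V0 s \<or> {x \<in> verts r s. \<not> sub e x} = H0 r)
     \<longleftrightarrow> (e = (1,0) \<or> e = (0,1))"
proof
  assume "e = (1,0) \<or> e = (0,1)"
  then show "{x \<in> verts r s. \<not> sub e x} = V0 s \<or> {x \<in> verts r s. \<not> sub e x} = H0 r"
  proof
    assume e: "e = (1,0)"
    have "{x \<in> verts r s. \<not> sub e x} = V0 s"
      using ev unfolding e by (auto simp: V0_def verts_def sub_def)
    then show ?thesis ..
  next
    assume e: "e = (0,1)"
    have "{x \<in> verts r s. \<not> sub e x} = H0 r"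
      using ev unfolding e by (auto simp: H0_def verts_def sub_def)
    then show ?thesis ..
  qed
next
  assume "{x \<in> verts r s. \<not> sub e x} = V0 s \<or> {x \<in> verts r s. \<not> sub e x} = H0 r"
  then show "e = (1,0) \<or> e = (0,1)"
  proof
    assume D: "{x \<in> verts r s. \<not> sub e x} = V0 s"
    have "e \<notin> V0 s" using D sub_refl[of e] by blast
    then have f: "fst e \<noteq> 0" using ev by (cases e) (auto simp: V0_def verts_def)
    then have "(1,0) \<in> verts r s" using ev by (auto simp: verts_iff)
    moreover have "(1::nat,0::nat) \<notin> V0 s" by (simp add: V0_def)
    ultimately have "sub e (1,0)" using D by blast
    then have "e = (1,0)" using f by (cases e) (auto simp: sub_def)
    then show ?thesis ..
  next
    assume D: "{x \<in> verts r s. \<not> sub e x} = H0 r"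
    have "e \<notin> H0 r" using D sub_refl[of e] by blast
    then have f: "snd e \<noteq> 0" using ev by (cases e) (auto simp: H0_def verts_def)
    then have "(0,1) \<in> verts r s" using ev by (auto simp: verts_iff)
    moreover have "(0::nat,1::nat) \<notin> H0 r" by (simp add: H0_def)
    ultimately have "sub e (0,1)" using D by blast
    then have "e = (0,1)" using f by (cases e) (auto simp: sub_def)
    then show ?thesis ..
  qed
qed

lemma (in twoc) nonatom2:
  assumes na: "\<not> (e = (1,0) \<or> e = (0,1))"
  shows "\<not> lesser_simply_paired r s T"
proof (cases "fst e \<ge> 1")
  case True
  show ?thesis
  proof (rule nonatom[of fst "(1,0)"])
    show "(1,0) \<in> verts r s" using ev True by (auto simp: verts_iff)
    show "sub (1,0) e" using True by (simp add: sub_def)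
    show "\<not> sub e (1,0)" using na True by (cases e) (auto simp: sub_def)
  qed (use True in auto)
next
  case False
  then have f: "fst e = 0" by simp
  then have "snd e \<ge> 2" using na e0 by (cases e) auto
  show ?thesis
  proof (rule nonatom[of snd "(0,1)"])
    show "(0,1) \<in> verts r s" using ev \<open>snd e \<ge> 2\<close> by (auto simp: verts_iff)
    show "sub (0,1) e" using \<open>snd e \<ge> 2\<close> by (simp add: sub_def)
    show "\<not> sub e (0,1)" using \<open>snd e \<ge> 2\<close> by (cases e) (auto simp: sub_def)
  qed (use \<open>snd e \<ge> 2\<close> in auto)
qed

theorem mainTheorem16:
  fixes p q r s :: nat and T :: "vtx rel"
  assumes "prime p" and "prime q" and "p \<noteq> q"
    and "transfer_system r s T"
    and "num_components r s T = 2"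
  shows "(lesser_simply_paired r s T \<longleftrightarrow>
            (component T (0, 0) = V0 s \<or> component T (0, 0) = H0 r))
       \<and> ((component T (0, 0) = V0 s \<or> component T (0, 0) = H0 r) \<longrightarrow>
            Hull r s T \<noteq> complete_ts r s
          \<and> transfer_system r s (Hull r s T)
          \<and> compatible r s T (Hull r s T)
          \<and> compatible r s T (complete_ts r s)
          \<and> (\<forall>T'. transfer_system r s T' \<and> compatible r s T T' \<longrightarrow>
                  T' = Hull r s T \<or> T' = complete_ts r s))"
proof -
  obtain e where ev: "e \<in> verts r s" and e0: "e \<noteq> (0,0)"
    and D: "component T (0,0) = {x \<in> verts r s. \<not> sub e x}"
    and TR: "T \<subseteq> Rel r s e"
    and rE: "\<forall>y\<in>verts r s. sub e y \<longrightarrow> (e,y) \<in> T"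
    and rD: "\<forall>y\<in>verts r s. \<not> sub e y \<longrightarrow> ((0,0),y) \<in> T"
    using struct[OF assms(4,5)] by blast
  interpret twoc r s T e using assms(4) ev e0 TR rE rD by unfold_locales
  have ci: "(component T (0, 0) = V0 s \<or> component T (0, 0) = H0 r) \<longleftrightarrow> (e = (1,0) \<or> e = (0,1))"
    unfolding D by (rule cond_iff[OF ev e0])
  have B: "Hull r s T \<noteq> complete_ts r s
          \<and> transfer_system r s (Hull r s T)
          \<and> compatible r s T (Hull r s T)
          \<and> compatible r s T (complete_ts r s)
          \<and> (\<forall>T'. transfer_system r s T' \<and> compatible r s T T' \<longrightarrow>
                  T' = Hull r s T \<or> T' = complete_ts r s)" if atom: "e = (1,0) \<or> e = (0,1)"
    using Hull_eq Rel_ne_complete Rel_ts Rel_compat complete_compat atom_case[OF atom] by auto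
  have A: "lesser_simply_paired r s T \<longleftrightarrow> (e = (1,0) \<or> e = (0,1))"
  proof
    assume "lesser_simply_paired r s T"
    then show "e = (1,0) \<or> e = (0,1)" using nonatom2 by blast
  next
    assume atom: "e = (1,0) \<or> e = (0,1)"
    show "lesser_simply_paired r s T"
      unfolding lesser_simply_paired_def
      using B[OF atom] by blast
  qed
  show ?thesis using A B ci by blast
qed


end
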